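(* Let $t$ be a rooted tree with vertex set $I$ and $t'$ a rooted tree with vertex set $I'$. The intervals $[\widehat{0},t]$ in $\Pi_{\operatorname{NAP}}(I)$ and $[\widehat{0},t']$ in $\Pi_{\operatorname{NAP}}(I')$ are isomorphic posets if and only if $t$ and $t'$ have the same underlying unlabeled rooted tree (i.e. are isomorphic as rooted trees). Consequently the coinvariants of $\operatorname{NAP}$ are in bijection with the isomorphism classes of the posets $[\widehat{0},t]$, $t$ a rooted tree.
   Context: $\operatorname{NAP}(I)$ is the set of rooted trees with vertex set $I$; its coinvariants $\operatorname{NAP}(n)_{\mathfrak{S}_n}$ are the unlabeled rooted trees with $n$ vertices. $\Pi_{\operatorname{NAP}}(I)$ is the set of forests of rooted trees whose vertex set is exactly $I$, partially ordered as follows: $y$ covers $x$ iff $y$ is obtained from $x$ by adding an edge from the root of one component of $x$ to the root of another component (the latter root remaining the root); $\leq$ is the reflexive–transitive closure. $\widehat{0}$ is the forest of one-vertex trees. *)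

theory Defs
  imports Main
begin

text \<open>A rooted forest on the vertex set I is represented by its set of edges,
  each edge (c, p) pointing from a child c to its parent p.  Every vertex has at
  most one parent and there are no cycles; roots are the vertices without parent.\<close>

definition nap_forest :: "'a set \<Rightarrow> ('a \<times> 'a) set \<Rightarrow> bool" where
  "nap_forest I F \<longleftrightarrow> finite I \<and> F \<subseteq> I \<times> I
     \<and> (\<forall>x y z. (x, y) \<in> F \<longrightarrow> (x, z) \<in> F \<longrightarrow> y = z)
     \<and> (\<forall>x. (x, x) \<notin> F\<^sup>+)"

definition nap_is_root :: "'a set \<Rightarrow> ('a \<times> 'a) set \<Rightarrow> 'a \<Rightarrow> bool" where
  "nap_is_root I F r \<longleftrightarrow> r \<in> I \<and> (\<forall>y. (r, y) \<notin> F)"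

definition nap_rooted_tree :: "'a set \<Rightarrow> ('a \<times> 'a) set \<Rightarrow> bool" where
  "nap_rooted_tree I t \<longleftrightarrow> nap_forest I t \<and> (\<exists>!r. nap_is_root I t r)"

definition nap_cover :: "'a set \<Rightarrow> ('a \<times> 'a) set \<Rightarrow> ('a \<times> 'a) set \<Rightarrow> bool" where
  "nap_cover I x y \<longleftrightarrow> nap_forest I x \<and>
     (\<exists>r1 r2. r1 \<noteq> r2 \<and> nap_is_root I x r1 \<and> nap_is_root I x r2 \<and> y = insert (r1, r2) x)"

definition nap_le :: "'a set \<Rightarrow> ('a \<times> 'a) set \<Rightarrow> ('a \<times> 'a) set \<Rightarrow> bool" where
  "nap_le I x y \<longleftrightarrow> nap_forest I x \<and> (nap_cover I)\<^sup>*\<^sup>* x y"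

definition nap_bot :: "('a \<times> 'a) set" where
  "nap_bot = {}"

definition nap_interval :: "'a set \<Rightarrow> ('a \<times> 'a) set \<Rightarrow> ('a \<times> 'a) set set" where
  "nap_interval I t = {x. nap_le I nap_bot x \<and> nap_le I x t}"

definition poset_iso :: "'c set \<Rightarrow> ('c \<Rightarrow> 'c \<Rightarrow> bool) \<Rightarrow> 'd set \<Rightarrow> ('d \<Rightarrow> 'd \<Rightarrow> bool) \<Rightarrow> bool" where
  "poset_iso P leP Q leQ \<longleftrightarrow>
     (\<exists>f. bij_betw f P Q \<and> (\<forall>x\<in>P. \<forall>y\<in>P. leP x y \<longleftrightarrow> leQ (f x) (f y)))"

definition rooted_tree_iso :: "'a set \<Rightarrow> ('a \<times> 'a) set \<Rightarrow> 'b set \<Rightarrow> ('b \<times> 'b) set \<Rightarrow> bool" where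
  "rooted_tree_iso I t I' t' \<longleftrightarrow>
     (\<exists>g. bij_betw g I I' \<and> (\<forall>a\<in>I. \<forall>b\<in>I. (a, b) \<in> t \<longleftrightarrow> (g a, g b) \<in> t'))"

end

theory Submission
  imports Defs
begin

definition DC :: "('a \<times> 'a) set \<Rightarrow> ('a \<times> 'a) set \<Rightarrow> bool" where
  "DC t x \<longleftrightarrow> (\<forall>p q c. (p, q) \<in> x \<longrightarrow> (c, p) \<in> t \<longrightarrow> (c, p) \<in> x)"

lemma chain_sub:
  assumes "(nap_cover I)\<^sup>*\<^sup>* x y"
  shows "x \<subseteq> y \<and> DC y x"
  using assms
proof (induction rule: rtranclp_induct)
  case base
  then show ?case by (auto simp: DC_def)
next
  case (step y z)
  then obtain r1 r2 where r: "nap_is_root I y r1" "nap_is_root I y r2" "z = insert (r1, r2) y"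
    by (auto simp: nap_cover_def)
  have "DC z x"
    unfolding DC_def
  proof (intro allI impI)
    fix p q c assume pq: "(p, q) \<in> x" and cp: "(c, p) \<in> z"
    show "(c, p) \<in> x"
    proof (cases "(c, p) \<in> y")
      case True then show ?thesis using step.IH pq by (auto simp: DC_def)
    next
      case False
      then have "p = r2" using cp r by auto
      moreover have "(p, q) \<in> y" using pq step.IH by auto
      ultimately show ?thesis using r(2) by (auto simp: nap_is_root_def)
    qed
  qed
  then show ?case using step.IH r by auto
qed

lemma forest_subset:
  assumes "nap_forest I y" "z \<subseteq> y"
  shows "nap_forest I z"
proof -
  have "z\<^sup>+ \<subseteq> y\<^sup>+" using assms(2) by (rule trancl_mono_subset)
  then show ?thesis using assms unfolding nap_forest_def by blast
qed

lemma forest_wf: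
  assumes "nap_forest I y"
  shows "wf y" "wf (y\<inverse>)"
proof -
  have "finite y" using assms unfolding nap_forest_def
    by (meson finite_SigmaI finite_subset)
  moreover have "acyclic y" using assms unfolding nap_forest_def acyclic_def by blast
  ultimately show "wf y" "wf (y\<inverse>)"
    by (auto intro: finite_acyclic_wf finite_acyclic_wf_converse)
qed

lemma build:
  assumes F: "nap_forest I y"
  shows "z \<subseteq> y \<Longrightarrow> DC y z \<Longrightarrow> (nap_cover I)\<^sup>*\<^sup>* z y"
proof (induction "card (y - z)" arbitrary: z rule: less_induct)
  case less
  have fin: "finite y" using F unfolding nap_forest_def
    by (meson finite_SigmaI finite_subset)
  have sub: "y \<subseteq> I \<times> I" and fnc: "\<And>x a b. (x, a) \<in> y \<Longrightarrow> (x, b) \<in> y \<Longrightarrow> a = b"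
    and acyc: "\<And>x. (x, x) \<notin> y\<^sup>+" using F unfolding nap_forest_def by blast+
  show ?case
  proof (cases "z = y")
    case True then show ?thesis by simp
  next
    case False
    then have ne: "fst ` (y - z) \<noteq> {}" using less.prems by blast
    then obtain c0 where "c0 \<in> fst ` (y - z)" by blast
    then obtain c where c: "c \<in> fst ` (y - z)" and min: "\<And>d. (d, c) \<in> y \<Longrightarrow> d \<notin> fst ` (y - z)"
      using forest_wf(1)[OF F] unfolding wf_eq_minimal by metis
    then obtain p where cp: "(c, p) \<in> y" "(c, p) \<notin> z" by force
    have children: "\<And>d. (d, c) \<in> y \<Longrightarrow> (d, c) \<in> z"
      using min by force
    define z' where "z' = insert (c, p) z"
    have Fz: "nap_forest I z" using forest_subset[OF F less.prems(1)] .
    have rc: "nap_is_root I z c"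
      unfolding nap_is_root_def using cp sub fnc less.prems(1) by blast
    have rp: "nap_is_root I z p"
      unfolding nap_is_root_def using cp sub less.prems(2) unfolding DC_def by blast
    have ne2: "c \<noteq> p" using cp acyc by blast
    have cov: "nap_cover I z z'"
      unfolding nap_cover_def z'_def using Fz rc rp ne2 by blast
    have z'y: "z' \<subseteq> y" using cp less.prems(1) z'_def by blast
    have dc': "DC y z'"
      unfolding DC_def z'_def
    proof (intro allI impI)
      fix a b d assume ab: "(a, b) \<in> insert (c, p) z" and da: "(d, a) \<in> y"
      show "(d, a) \<in> insert (c, p) z"
      proof (cases "(a, b) = (c, p)")
        case True then show ?thesis using children da by auto
      next
        case False then show ?thesis using ab da less.prems(2) unfolding DC_def by blast
      qed
    qed
    have "y - z' = (y - z) - {(c, p)}" using z'_def by blast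
    then have "card (y - z') < card (y - z)"
      using cp fin by (metis DiffI card_Diff1_less finite_Diff)
    then have "(nap_cover I)\<^sup>*\<^sup>* z' y" using less.hyps z'y dc' by blast
    then show ?thesis using cov by (meson converse_rtranclp_into_rtranclp)
  qed
qed

lemma interval_char:
  assumes F: "nap_forest I t"
  shows "nap_interval I t = {x. x \<subseteq> t \<and> DC t x}"
proof (intro set_eqI iffI)
  fix x assume "x \<in> nap_interval I t"
  then have "(nap_cover I)\<^sup>*\<^sup>* x t" unfolding nap_interval_def nap_le_def by blast
  then show "x \<in> {x. x \<subseteq> t \<and> DC t x}" using chain_sub by blast
next
  fix x assume x: "x \<in> {x. x \<subseteq> t \<and> DC t x}"
  then have Fx: "nap_forest I x" using forest_subset F by blast
  have "nap_forest I {}" using forest_subset F by blast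
  moreover have "(nap_cover I)\<^sup>*\<^sup>* {} x" using build[OF Fx] by (auto simp: DC_def)
  moreover have "(nap_cover I)\<^sup>*\<^sup>* x t" using build[OF F] x by blast
  ultimately show "x \<in> nap_interval I t"
    unfolding nap_interval_def nap_le_def nap_bot_def using Fx by blast
qed

lemma le_char:
  assumes F: "nap_forest I t" and x: "x \<in> nap_interval I t" and y: "y \<in> nap_interval I t"
  shows "nap_le I x y \<longleftrightarrow> x \<subseteq> y"
proof
  assume "nap_le I x y" then show "x \<subseteq> y" using chain_sub unfolding nap_le_def by blast
next
  assume xy: "x \<subseteq> y"
  have xs: "x \<subseteq> t" "DC t x" and ys: "y \<subseteq> t" using x y interval_char[OF F] by auto
  have Fy: "nap_forest I y" using forest_subset F ys by blast
  have Fx: "nap_forest I x" using forest_subset F xs by blast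
  have "DC y x" using xs ys unfolding DC_def by blast
  then show "nap_le I x y" using build[OF Fy] xy Fx unfolding nap_le_def by blast
qed

definition Esub :: "('a \<times> 'a) set \<Rightarrow> 'a \<Rightarrow> ('a \<times> 'a) set" where
  "Esub t v = {e \<in> t. (fst e, v) \<in> t\<^sup>*}"

definition JI :: "'c set set \<Rightarrow> 'c set \<Rightarrow> bool" where
  "JI L x \<longleftrightarrow> x \<in> L \<and> (\<exists>m\<in>L. m \<subset> x \<and> (\<forall>y\<in>L. y \<subset> x \<longrightarrow> y \<subseteq> m))"

lemma JI_transfer:
  assumes "bij_betw f L L'" "\<forall>x\<in>L. \<forall>y\<in>L. x \<subseteq> y \<longleftrightarrow> f x \<subseteq> f y" "x \<in> L"
  shows "JI L' (f x) \<longleftrightarrow> JI L x"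
proof -
  have lt: "\<And>a b. a \<in> L \<Longrightarrow> b \<in> L \<Longrightarrow> f a \<subset> f b \<longleftrightarrow> a \<subset> b"
    using assms(2) by blast
  have le: "\<And>a b. a \<in> L \<Longrightarrow> b \<in> L \<Longrightarrow> f a \<subseteq> f b \<longleftrightarrow> a \<subseteq> b"
    using assms(2) by blast
  have im: "f ` L = L'" using assms(1) by (simp add: bij_betw_def)
  have ex: "(\<exists>m'\<in>L'. Q m') \<longleftrightarrow> (\<exists>m\<in>L. Q (f m))" for Q using im by blast
  have al: "(\<forall>m'\<in>L'. Q m') \<longleftrightarrow> (\<forall>m\<in>L. Q (f m))" for Q using im by blast
  have fx: "f x \<in> L'" using im assms(3) by blast
  have "(\<exists>m\<in>L. f m \<subset> f x \<and> (\<forall>y\<in>L. f y \<subset> f x \<longrightarrow> f y \<subseteq> f m))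
      \<longleftrightarrow> (\<exists>m\<in>L. m \<subset> x \<and> (\<forall>y\<in>L. y \<subset> x \<longrightarrow> y \<subseteq> m))"
    using assms(3) by (simp add: lt le cong: bex_cong ball_cong)
  then show ?thesis unfolding JI_def ex al using fx assms(3) by simp
qed

locale rtree =
  fixes I :: "'a set" and t :: "('a \<times> 'a) set" and r :: 'a
  assumes rt: "nap_rooted_tree I t" and root: "nap_is_root I t r"
begin

abbreviation "P \<equiv> I - {r}"
abbreviation "L \<equiv> {x. x \<subseteq> t \<and> DC t x}"

lemma F: "nap_forest I t" using rt by (simp add: nap_rooted_tree_def)
lemma sub: "t \<subseteq> I \<times> I" using F by (simp add: nap_forest_def)
lemma fnc: "(x, a) \<in> t \<Longrightarrow> (x, b) \<in> t \<Longrightarrow> a = b" using F unfolding nap_forest_def by blast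
lemma acyc: "(x, x) \<notin> t\<^sup>+" using F unfolding nap_forest_def by blast
lemma rI: "r \<in> I" using root by (simp add: nap_is_root_def)
lemma rnot: "(r, b) \<notin> t" using root by (simp add: nap_is_root_def)

lemma parent: "v \<in> I \<Longrightarrow> v \<noteq> r \<Longrightarrow> \<exists>p. (v, p) \<in> t"
  using rt root unfolding nap_rooted_tree_def nap_is_root_def by blast

lemma r_star: "(r, b) \<in> t\<^sup>* \<Longrightarrow> b = r"
  by (erule converse_rtranclE) (auto simp: rnot)

lemma antisym_star: "(a, b) \<in> t\<^sup>* \<Longrightarrow> (b, a) \<in> t\<^sup>* \<Longrightarrow> a = b"
  by (metis acyc rtrancl_trancl_trancl rtranclD)

lemma first_step: "(a, b) \<in> t \<Longrightarrow> (a, w) \<in> t\<^sup>+ \<Longrightarrow> (b, w) \<in> t\<^sup>*"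
  by (metis fnc tranclD)

lemma edge_root:
  assumes a: "a \<in> P"
  shows "(a, r) \<in> t \<longleftrightarrow> (\<forall>w\<in>P. (a, w) \<in> t\<^sup>* \<longrightarrow> w = a)"
proof
  assume ar: "(a, r) \<in> t"
  show "\<forall>w\<in>P. (a, w) \<in> t\<^sup>* \<longrightarrow> w = a"
  proof (intro ballI impI)
    fix w assume w: "w \<in> P" "(a, w) \<in> t\<^sup>*"
    show "w = a"
    proof (rule ccontr)
      assume "w \<noteq> a"
      then have "(a, w) \<in> t\<^sup>+" using w by (metis rtranclD)
      then have "(r, w) \<in> t\<^sup>*" using first_step ar by blast
      then show False using r_star w by blast
    qed
  qed
next
  assume H: "\<forall>w\<in>P. (a, w) \<in> t\<^sup>* \<longrightarrow> w = a"
  obtain p where p: "(a, p) \<in> t" using parent a by blast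
  have "p \<in> I" using p sub by blast
  moreover have "p \<noteq> a" using p acyc by blast
  ultimately have "p = r" using H p by blast
  then show "(a, r) \<in> t" using p by simp
qed

lemma edge_P:
  assumes a: "a \<in> P" and b: "b \<in> P"
  shows "(a, b) \<in> t \<longleftrightarrow> (a, b) \<in> t\<^sup>* \<and> a \<noteq> b \<and> (\<forall>w\<in>P. (a, w) \<in> t\<^sup>* \<and> (w, b) \<in> t\<^sup>* \<longrightarrow> w = a \<or> w = b)"
proof
  assume ab: "(a, b) \<in> t"
  have "a \<noteq> b" using ab acyc by blast
  moreover have "\<forall>w\<in>P. (a, w) \<in> t\<^sup>* \<and> (w, b) \<in> t\<^sup>* \<longrightarrow> w = a \<or> w = b"
  proof (intro ballI impI)
    fix w assume w: "w \<in> P" "(a, w) \<in> t\<^sup>* \<and> (w, b) \<in> t\<^sup>*"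
    show "w = a \<or> w = b"
    proof (cases "w = a")
      case False
      then have "(a, w) \<in> t\<^sup>+" using w by (metis rtranclD)
      then have "(b, w) \<in> t\<^sup>*" using first_step ab by blast
      then show ?thesis using w antisym_star by blast
    qed simp
  qed
  ultimately show "(a, b) \<in> t\<^sup>* \<and> a \<noteq> b \<and> (\<forall>w\<in>P. (a, w) \<in> t\<^sup>* \<and> (w, b) \<in> t\<^sup>* \<longrightarrow> w = a \<or> w = b)"
    using ab by blast
next
  assume H: "(a, b) \<in> t\<^sup>* \<and> a \<noteq> b \<and> (\<forall>w\<in>P. (a, w) \<in> t\<^sup>* \<and> (w, b) \<in> t\<^sup>* \<longrightarrow> w = a \<or> w = b)"
  then have "(a, b) \<in> t\<^sup>+" by (metis rtranclD)
  then obtain p where p: "(a, p) \<in> t" "(p, b) \<in> t\<^sup>*" by (meson tranclD)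
  have "p \<in> I" using p sub by blast
  moreover have "p \<noteq> r" using p r_star b by blast
  moreover have "p \<noteq> a" using p acyc by blast
  ultimately have "p = b" using H p by blast
  then show "(a, b) \<in> t" using p by simp
qed

lemma DC_down:
  assumes x: "x \<subseteq> t" "DC t x" and cq: "(c, q) \<in> x"
  shows "Esub t c \<subseteq> x"
proof
  fix e assume e: "e \<in> Esub t c"
  obtain a b where ab: "e = (a, b)" by fastforce
  have abt: "(a, b) \<in> t" and ac: "(a, c) \<in> t\<^sup>*" using e ab by (auto simp: Esub_def)
  have "\<exists>q. (a, q) \<in> x" using ac
  proof (induction rule: converse_rtrancl_induct)
    case base then show ?case using cq by blast
  next
    case (step a a')
    then show ?case using x(2) unfolding DC_def by blast
  qed
  then obtain q' where "(a, q') \<in> x" by blast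
  then have "q' = b" using x(1) abt fnc by blast
  then show "e \<in> x" using \<open>(a, q') \<in> x\<close> ab by simp
qed

lemma Esub_L: "Esub t v \<in> L"
proof -
  have "Esub t v \<subseteq> t" unfolding Esub_def by blast
  moreover have "DC t (Esub t v)"
    unfolding DC_def Esub_def
    by (auto intro: converse_rtrancl_into_rtrancl)
  ultimately show ?thesis by blast
qed

lemma JI_E:
  assumes v: "v \<in> P"
  shows "JI L (Esub t v)"
proof -
  obtain pv where pv: "(v, pv) \<in> t" using parent v by blast
  define m where "m = Esub t v - {(v, pv)}"
  have vE: "(v, pv) \<in> Esub t v" using pv by (simp add: Esub_def)
  have mL: "m \<in> L"
  proof -
    have "m \<subseteq> t" unfolding m_def Esub_def by blast
    moreover have "DC t m"
      unfolding DC_def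
    proof (intro allI impI)
      fix a b d assume ab: "(a, b) \<in> m" and da: "(d, a) \<in> t"
      have av: "(a, v) \<in> t\<^sup>*" using ab by (simp add: m_def Esub_def)
      then have dv: "(d, v) \<in> t\<^sup>*" using da by (meson converse_rtrancl_into_rtrancl)
      have "d \<noteq> v"
      proof
        assume "d = v"
        then show False using av da by (meson acyc rtrancl_into_trancl2)
      qed
      then show "(d, a) \<in> m" using da dv by (simp add: m_def Esub_def)
    qed
    ultimately show ?thesis by blast
  qed
  have lt: "m \<subset> Esub t v" using vE m_def by blast
  have gr: "\<forall>y\<in>L. y \<subset> Esub t v \<longrightarrow> y \<subseteq> m"
  proof (intro ballI impI)
    fix y assume y: "y \<in> L" "y \<subset> Esub t v"
    have "(v, pv) \<notin> y"
    proof
      assume "(v, pv) \<in> y"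
      then have "Esub t v \<subseteq> y" using DC_down y by blast
      then show False using y by blast
    qed
    then show "y \<subseteq> m" using y m_def by blast
  qed
  show ?thesis unfolding JI_def using Esub_L mL lt gr by blast
qed

lemma JI_inv:
  assumes J: "JI L x"
  shows "\<exists>v\<in>P. x = Esub t v"
proof -
  have xL: "x \<in> L" using J unfolding JI_def by blast
  have "\<exists>m\<in>L. m \<subset> x \<and> (\<forall>y\<in>L. y \<subset> x \<longrightarrow> y \<subseteq> m)"
    using J unfolding JI_def by (rule conjunct2)
  then obtain m where mL: "m \<in> L" and mx: "m \<subset> x"
    and gr0: "\<forall>y\<in>L. y \<subset> x \<longrightarrow> y \<subseteq> m"
    by (elim bexE conjE)
  have gr: "y \<subseteq> m" if "y \<in> L" "y \<subset> x" for y
    using bspec[OF gr0 that(1)] that(2) by (rule mp)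
  have xs: "x \<subseteq> t" "DC t x" using xL by auto
  have "x \<noteq> {}" using mx by blast
  then obtain p0 where p0: "p0 \<in> snd ` x" by blast
  have "\<exists>p\<in>snd ` x. \<forall>q. (q, p) \<in> t\<inverse> \<longrightarrow> q \<notin> snd ` x"
    using forest_wf(2)[OF F] p0 unfolding wf_eq_minimal by blast
  then obtain p where p: "p \<in> snd ` x" and pmin: "\<And>q. (q, p) \<in> t\<inverse> \<Longrightarrow> q \<notin> snd ` x"
    by blast
  obtain c where cp: "(c, p) \<in> x" using p by auto
  have top: "\<And>q. (p, q) \<notin> x"
  proof
    fix q assume "(p, q) \<in> x"
    then have "(p, q) \<in> t" "q \<in> snd ` x" using xs by force+
    then show False using pmin by blast
  qed
  have "(c, p) \<in> t" using cp xs by blast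
  then have cP: "c \<in> P" using sub rnot by blast
  have Ex: "Esub t c \<subseteq> x" using DC_down xs cp by blast
  have diffL: "x - Esub t c \<in> L"
    unfolding DC_def
  proof (safe)
    show "\<And>a b. (a, b) \<in> x \<Longrightarrow> (a, b) \<in> t" using xs by blast
  next
    fix a b d
    assume ab: "(a, b) \<in> x" "(a, b) \<notin> Esub t c" and da: "(d, a) \<in> t"
    show "(d, a) \<in> x" using xs(2) ab da unfolding DC_def by blast
  next
    fix a b d
    assume ab: "(a, b) \<in> x" "(a, b) \<notin> Esub t c" and da: "(d, a) \<in> t" and dE: "(d, a) \<in> Esub t c"
    have dc: "(d, c) \<in> t\<^sup>*" using dE by (simp add: Esub_def)
    show False
    proof (cases "d = c")
      case True
      then have "a = p" using da cp xs fnc by blast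
      then show False using ab top by blast
    next
      case False
      then have "(d, c) \<in> t\<^sup>+" using dc by (metis rtranclD)
      then have "(a, c) \<in> t\<^sup>*" using first_step da by blast
      then show False using ab xs by (auto simp: Esub_def)
    qed
  qed
  have cpE: "(c, p) \<in> Esub t c" using cp xs by (auto simp: Esub_def)
  have "x - Esub t c \<subset> x" using cpE cp by blast
  then have "x - Esub t c \<subseteq> m" using gr[OF diffL] by blast
  show ?thesis
  proof (cases "Esub t c = x")
    case True then show ?thesis using cP by blast
  next
    case False
    then have "Esub t c \<subset> x" using Ex by blast
    then have "Esub t c \<subseteq> m" using gr[OF Esub_L] by blast
    then have "x \<subseteq> m" using \<open>x - Esub t c \<subseteq> m\<close> by blast
    then show ?thesis using mx by blast
  qed
qed

lemma E_mono:
  assumes "u \<in> P" "v \<in> P"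
  shows "Esub t u \<subseteq> Esub t v \<longleftrightarrow> (u, v) \<in> t\<^sup>*"
proof
  assume H: "Esub t u \<subseteq> Esub t v"
  obtain pu where pu: "(u, pu) \<in> t" using parent assms by blast
  then have "(u, pu) \<in> Esub t u" by (simp add: Esub_def)
  then show "(u, v) \<in> t\<^sup>*" using H by (auto simp: Esub_def)
next
  assume "(u, v) \<in> t\<^sup>*"
  then show "Esub t u \<subseteq> Esub t v" by (auto simp: Esub_def)
qed

end

lemma iso_char:
  assumes F: "nap_forest I t" and F': "nap_forest I' t'"
  shows "poset_iso (nap_interval I t) (nap_le I) (nap_interval I' t') (nap_le I') \<longleftrightarrow>
    (\<exists>f. bij_betw f (nap_interval I t) (nap_interval I' t') \<and>
       (\<forall>x\<in>nap_interval I t. \<forall>y\<in>nap_interval I t. x \<subseteq> y \<longleftrightarrow> f x \<subseteq> f y))"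
  unfolding poset_iso_def
proof (intro ex_cong1 conj_cong refl)
  fix f assume b: "bij_betw f (nap_interval I t) (nap_interval I' t')"
  show "(\<forall>x\<in>nap_interval I t. \<forall>y\<in>nap_interval I t. nap_le I x y = nap_le I' (f x) (f y)) =
        (\<forall>x\<in>nap_interval I t. \<forall>y\<in>nap_interval I t. (x \<subseteq> y) = (f x \<subseteq> f y))"
  proof (intro ball_cong refl)
    fix x y assume x: "x \<in> nap_interval I t" and y: "y \<in> nap_interval I t"
    have "f x \<in> nap_interval I' t'" "f y \<in> nap_interval I' t'" using b x y bij_betwE by blast+
    then show "(nap_le I x y = nap_le I' (f x) (f y)) = ((x \<subseteq> y) = (f x \<subseteq> f y))"
      using le_char[OF F x y] le_char[OF F'] by simp
  qed
qed

lemma forward: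
  assumes F: "nap_forest I t" and F': "nap_forest I' t'"
    and g: "bij_betw g I I'" and e: "\<forall>a\<in>I. \<forall>b\<in>I. (a, b) \<in> t \<longleftrightarrow> (g a, g b) \<in> t'"
  shows "\<exists>f. bij_betw f {x. x \<subseteq> t \<and> DC t x} {x. x \<subseteq> t' \<and> DC t' x} \<and>
       (\<forall>x\<in>{x. x \<subseteq> t \<and> DC t x}. \<forall>y\<in>{x. x \<subseteq> t \<and> DC t x}. x \<subseteq> y \<longleftrightarrow> f x \<subseteq> f y)"
proof -
  let ?G = "map_prod g g"
  let ?L = "{x. x \<subseteq> t \<and> DC t x}" and ?L' = "{x. x \<subseteq> t' \<and> DC t' x}"
  have sub: "t \<subseteq> I \<times> I" using F by (simp add: nap_forest_def)
  have sub': "t' \<subseteq> I' \<times> I'" using F' by (simp add: nap_forest_def)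
  have inj: "inj_on ?G (I \<times> I)" using g by (simp add: bij_betw_def map_prod_inj_on)
  have gI: "g ` I = I'" using g by (simp add: bij_betw_def)
  have t't: "t' = ?G ` t"
  proof
    show "t' \<subseteq> ?G ` t"
    proof
      fix e' assume e': "e' \<in> t'"
      then obtain a' b' where ab': "e' = (a', b')" "a' \<in> I'" "b' \<in> I'" using sub' by blast
      then obtain a b where "a \<in> I" "b \<in> I" "a' = g a" "b' = g b" using gI by blast
      then show "e' \<in> ?G ` t" using e e' ab' by force
    qed
  next
    show "?G ` t \<subseteq> t'" using e sub by auto
  qed
  have mapL: "?G ` x \<in> ?L'" if x: "x \<in> ?L" for x
  proof -
    have xt: "x \<subseteq> t" and dx: "DC t x" using x by auto
    have "?G ` x \<subseteq> t'" using xt t't by blast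
    moreover have "DC t' (?G ` x)"
      unfolding DC_def
    proof (intro allI impI)
      fix p q c assume pq: "(p, q) \<in> ?G ` x" and cp: "(c, p) \<in> t'"
      then obtain a b where ab: "(a, b) \<in> x" "p = g a" "q = g b" by auto
      obtain d a2 where da: "(d, a2) \<in> t" "c = g d" "p = g a2" using cp t't by auto
      have "a \<in> I" "a2 \<in> I" "d \<in> I" using ab xt sub da by blast+
      then have "a2 = a" using ab da g by (metis bij_betw_iff_bijections)
      then have "(d, a) \<in> x" using dx da ab unfolding DC_def by blast
      then show "(c, p) \<in> ?G ` x" using da ab by force
    qed
    ultimately show ?thesis by blast
  qed
  have ord: "x \<subseteq> y \<longleftrightarrow> ?G ` x \<subseteq> ?G ` y" if "x \<in> ?L" "y \<in> ?L" for x y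
  proof
    assume "x \<subseteq> y" then show "?G ` x \<subseteq> ?G ` y" by (rule image_mono)
  next
    assume H: "?G ` x \<subseteq> ?G ` y"
    have "x \<subseteq> t" "y \<subseteq> t" using that by simp_all
    then have xs: "x \<subseteq> I \<times> I" and ys: "y \<subseteq> I \<times> I" using sub by (meson order_trans)+
    show "x \<subseteq> y"
    proof
      fix e assume "e \<in> x"
      then have 1: "?G e \<in> ?G ` y" and 2: "e \<in> I \<times> I" using H xs by (blast, blast)
      show "e \<in> y" using 1 inj_on_image_mem_iff[OF inj 2 ys] by simp
    qed
  qed
  have bij: "bij_betw (\<lambda>x. ?G ` x) ?L ?L'"
    unfolding bij_betw_def
  proof
    show "inj_on (\<lambda>x. ?G ` x) ?L"
    proof (rule inj_onI)
      fix x y assume xy: "x \<in> ?L" "y \<in> ?L" and eq: "?G ` x = ?G ` y"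
      have "x \<subseteq> y" using ord[OF xy] eq by simp
      moreover have "y \<subseteq> x" using ord[OF xy(2) xy(1)] eq by simp
      ultimately show "x = y" by (rule subset_antisym)
    qed
    show "(\<lambda>x. ?G ` x) ` ?L = ?L'"
    proof
      show "(\<lambda>x. ?G ` x) ` ?L \<subseteq> ?L'" using mapL by blast
    next
      show "?L' \<subseteq> (\<lambda>x. ?G ` x) ` ?L"
      proof
        fix x' assume x': "x' \<in> ?L'"
        define x where "x = {e \<in> t. ?G e \<in> x'}"
        have x't: "x' \<subseteq> ?G ` t" using x' t't by (metis (no_types, lifting) mem_Collect_eq)
        have img: "?G ` x = x'"
        proof
          show "?G ` x \<subseteq> x'" unfolding x_def by (rule image_subsetI) simp
          show "x' \<subseteq> ?G ` x"
          proof
            fix e' assume "e' \<in> x'"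
            then obtain e where "e \<in> t" "e' = ?G e" using x't by (meson imageE subsetD)
            then have "e \<in> x" unfolding x_def using \<open>e' \<in> x'\<close> by simp
            then show "e' \<in> ?G ` x" using \<open>e' = ?G e\<close> by (rule rev_image_eqI)
          qed
        qed
        have dcx': "DC t' x'" using x' by (metis (no_types, lifting) mem_Collect_eq)
        have "x \<subseteq> t" unfolding x_def by blast
        moreover have "DC t x"
          unfolding DC_def
        proof (intro allI impI)
          fix a b d assume abx: "(a, b) \<in> x" and da: "(d, a) \<in> t"
          have ab: "(a, b) \<in> t" "(g a, g b) \<in> x'" using abx unfolding x_def by auto
          have "d \<in> I" "a \<in> I" using da sub by auto
          then have "(g d, g a) \<in> t'" using da e by blast
          then have "(g d, g a) \<in> x'" using ab dcx' unfolding DC_def by blast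
          then show "(d, a) \<in> x" using da unfolding x_def by simp
        qed
        ultimately have "x \<in> ?L" by simp
        then show "x' \<in> (\<lambda>x. ?G ` x) ` ?L" using img by blast
      qed
    qed
  qed
  show ?thesis
    apply (rule exI[of _ "\<lambda>x. ?G ` x"])
    apply (rule conjI[OF bij])
    apply (intro ballI)
    apply (rule ord)
    apply assumption+
    done
qed

lemma backward:
  assumes T: "rtree I t r" and T': "rtree I' t' r'"
    and b: "bij_betw f {x. x \<subseteq> t \<and> DC t x} {x. x \<subseteq> t' \<and> DC t' x}"
    and o: "\<forall>x\<in>{x. x \<subseteq> t \<and> DC t x}. \<forall>y\<in>{x. x \<subseteq> t \<and> DC t x}. x \<subseteq> y \<longleftrightarrow> f x \<subseteq> f y"
  shows "rooted_tree_iso I t I' t'"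
proof -
  interpret T: rtree I t r by (rule T)
  interpret T': rtree I' t' r' by (rule T')
  let ?L = "{x. x \<subseteq> t \<and> DC t x}" and ?L' = "{x. x \<subseteq> t' \<and> DC t' x}"
  have im: "f ` ?L = ?L'" using b by (simp add: bij_betw_def)
  have hE: "\<exists>w. w \<in> I' - {r'} \<and> f (Esub t v) = Esub t' w" if v: "v \<in> I - {r}" for v
  proof -
    have "JI ?L (Esub t v)" using T.JI_E[OF v] .
    then have "JI ?L' (f (Esub t v))" using JI_transfer[OF b o T.Esub_L] by simp
    then show ?thesis using T'.JI_inv by blast
  qed
  define h where "h v = (SOME w. w \<in> I' - {r'} \<and> f (Esub t v) = Esub t' w)" for v
  have hP: "h v \<in> I' - {r'} \<and> f (Esub t v) = Esub t' (h v)" if v: "v \<in> I - {r}" for v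
    unfolding h_def using someI_ex[OF hE[OF v]] .
  define g where "g v = (if v = r then r' else h v)" for v
  have gP: "g v \<in> I' - {r'}" and gE: "f (Esub t v) = Esub t' (g v)" if v: "v \<in> I - {r}" for v
    using hP[OF v] v unfolding g_def by auto
  have gr: "g r = r'" unfolding g_def by simp
  have star: "(u, v) \<in> t\<^sup>* \<longleftrightarrow> (g u, g v) \<in> t'\<^sup>*" if u: "u \<in> I - {r}" and v: "v \<in> I - {r}" for u v
  proof -
    have "(u, v) \<in> t\<^sup>* \<longleftrightarrow> Esub t u \<subseteq> Esub t v" using T.E_mono[OF u v] by simp
    also have "\<dots> \<longleftrightarrow> f (Esub t u) \<subseteq> f (Esub t v)" using bspec[OF bspec[OF o T.Esub_L] T.Esub_L] .
    also have "\<dots> \<longleftrightarrow> Esub t' (g u) \<subseteq> Esub t' (g v)" using gE u v by simp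
    also have "\<dots> \<longleftrightarrow> (g u, g v) \<in> t'\<^sup>*" using T'.E_mono[OF gP[OF u] gP[OF v]] .
    finally show ?thesis .
  qed
  have ginj: "g u = g v \<longleftrightarrow> u = v" if u: "u \<in> I - {r}" and v: "v \<in> I - {r}" for u v
  proof
    assume "g u = g v"
    then have "(u, v) \<in> t\<^sup>*" "(v, u) \<in> t\<^sup>*" using star[OF u v] star[OF v u] by auto
    then show "u = v" by (rule T.antisym_star)
  qed simp
  have gsurj: "\<exists>v\<in>I - {r}. g v = w" if w: "w \<in> I' - {r'}" for w
  proof -
    have J': "JI ?L' (Esub t' w)" using T'.JI_E[OF w] .
    have "Esub t' w \<in> ?L'" using T'.Esub_L .
    then have "Esub t' w \<in> f ` ?L" using im by simp
    then obtain x where x: "x \<in> ?L" "f x = Esub t' w" by (rule imageE) simp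
    have "JI ?L x" using JI_transfer[OF b o x(1)] J' x(2) by simp
    then have "\<exists>v\<in>I - {r}. x = Esub t v" by (rule T.JI_inv)
    then obtain v where v: "v \<in> I - {r}" "x = Esub t v" by blast
    have "Esub t' (g v) = Esub t' w" using gE[OF v(1)] x v by simp
    then have "(g v, w) \<in> t'\<^sup>*" "(w, g v) \<in> t'\<^sup>*"
      using T'.E_mono[OF gP[OF v(1)] w] T'.E_mono[OF w gP[OF v(1)]] by auto
    then have "g v = w" by (rule T'.antisym_star)
    then show ?thesis using v by blast
  qed
  have gPimg: "g ` (I - {r}) = I' - {r'}"
  proof
    show "g ` (I - {r}) \<subseteq> I' - {r'}" using gP by (rule image_subsetI)
    show "I' - {r'} \<subseteq> g ` (I - {r})"
    proof
      fix w assume "w \<in> I' - {r'}"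
      then obtain v where "v \<in> I - {r}" "g v = w" using gsurj by blast
      then show "w \<in> g ` (I - {r})" by (metis imageI)
    qed
  qed
  have allP: "(\<forall>w\<in>I - {r}. Q (g w)) \<longleftrightarrow> (\<forall>w'\<in>I' - {r'}. Q w')" for Q
  proof
    assume H: "\<forall>w\<in>I - {r}. Q (g w)"
    show "\<forall>w'\<in>I' - {r'}. Q w'"
    proof
      fix w' assume "w' \<in> I' - {r'}"
      then obtain v where "v \<in> I - {r}" "g v = w'" using gsurj by blast
      then show "Q w'" using H by blast
    qed
  next
    assume H: "\<forall>w'\<in>I' - {r'}. Q w'"
    show "\<forall>w\<in>I - {r}. Q (g w)"
    proof
      fix w assume "w \<in> I - {r}"
      then have "g w \<in> I' - {r'}" by (rule gP)
      then show "Q (g w)" using H by blast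
    qed
  qed
  have bij: "bij_betw g I I'"
    unfolding bij_betw_def
  proof
    show "inj_on g I"
    proof (rule inj_onI)
      fix u v assume u: "u \<in> I" and v: "v \<in> I" and eq: "g u = g v"
      show "u = v"
      proof (cases "u = r"; cases "v = r")
        assume "u = r" "v \<noteq> r" then show ?thesis using eq gr gP v by force
      next
        assume "u \<noteq> r" "v = r" then show ?thesis using eq gr gP u by force
      next
        assume "u \<noteq> r" "v \<noteq> r" then show ?thesis using eq ginj u v by blast
      qed simp
    qed
    show "g ` I = I'"
    proof -
      have "I = insert r (I - {r})" using T.rI by blast
      then have "g ` I = insert r' (g ` (I - {r}))" using gr by (metis image_insert)
      also have "\<dots> = I'" using gPimg T'.rI by blast
      finally show ?thesis .
    qed
  qed
  have edges: "(a, b) \<in> t \<longleftrightarrow> (g a, g b) \<in> t'" if a: "a \<in> I" and b: "b \<in> I" for a b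
  proof (cases "a = r")
    case True then show ?thesis using gr T.rnot T'.rnot by simp
  next
    case False
    then have aP: "a \<in> I - {r}" using a by blast
    show ?thesis
    proof (cases "b = r")
      case True
      have "(a, b) \<in> t \<longleftrightarrow> (\<forall>w\<in>I - {r}. (a, w) \<in> t\<^sup>* \<longrightarrow> w = a)" using T.edge_root[OF aP] True by simp
      also have "\<dots> \<longleftrightarrow> (\<forall>w\<in>I - {r}. (g a, g w) \<in> t'\<^sup>* \<longrightarrow> g w = g a)"
        using star[OF aP] ginj[OF _ aP] by (intro ball_cong refl) auto
      also have "\<dots> \<longleftrightarrow> (\<forall>w\<in>I' - {r'}. (g a, w) \<in> t'\<^sup>* \<longrightarrow> w = g a)" by (rule allP)
      also have "\<dots> \<longleftrightarrow> (g a, r') \<in> t'" using T'.edge_root[OF gP[OF aP]] by simp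
      finally show ?thesis using True gr by simp
    next
      case False
      then have bP: "b \<in> I - {r}" using b by blast
      have "(a, b) \<in> t \<longleftrightarrow> (a, b) \<in> t\<^sup>* \<and> a \<noteq> b \<and> (\<forall>w\<in>I - {r}. (a, w) \<in> t\<^sup>* \<and> (w, b) \<in> t\<^sup>* \<longrightarrow> w = a \<or> w = b)"
        using T.edge_P[OF aP bP] .
      also have "\<dots> \<longleftrightarrow> (g a, g b) \<in> t'\<^sup>* \<and> g a \<noteq> g b \<and> (\<forall>w\<in>I - {r}. (g a, g w) \<in> t'\<^sup>* \<and> (g w, g b) \<in> t'\<^sup>* \<longrightarrow> g w = g a \<or> g w = g b)"
        using star[OF aP] star[OF _ bP] star[OF aP bP] ginj[OF _ aP] ginj[OF _ bP] ginj[OF aP bP]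
        by (intro conj_cong ball_cong refl) auto
      also have "\<dots> \<longleftrightarrow> (g a, g b) \<in> t'\<^sup>* \<and> g a \<noteq> g b \<and> (\<forall>w\<in>I' - {r'}. (g a, w) \<in> t'\<^sup>* \<and> (w, g b) \<in> t'\<^sup>* \<longrightarrow> w = g a \<or> w = g b)"
        using allP[of "\<lambda>w. (g a, w) \<in> t'\<^sup>* \<and> (w, g b) \<in> t'\<^sup>* \<longrightarrow> w = g a \<or> w = g b"] by simp
      also have "\<dots> \<longleftrightarrow> (g a, g b) \<in> t'" using T'.edge_P[OF gP[OF aP] gP[OF bP]] by simp
      finally show ?thesis .
    qed
  qed
  show ?thesis unfolding rooted_tree_iso_def using bij edges by blast
qed

theorem proposition6p6:
  fixes I :: "'a set" and t :: "('a \<times> 'a) set"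
    and I' :: "'b set" and t' :: "('b \<times> 'b) set"
  assumes "nap_rooted_tree I t" and "nap_rooted_tree I' t'"
  shows "poset_iso (nap_interval I t) (nap_le I) (nap_interval I' t') (nap_le I')
         \<longleftrightarrow> rooted_tree_iso I t I' t'"
proof -
  obtain r where r: "nap_is_root I t r" using assms(1) unfolding nap_rooted_tree_def by blast
  obtain r' where r': "nap_is_root I' t' r'" using assms(2) unfolding nap_rooted_tree_def by blast
  have T: "rtree I t r" using assms(1) r by (simp add: rtree_def)
  have T': "rtree I' t' r'" using assms(2) r' by (simp add: rtree_def)
  have F: "nap_forest I t" using assms(1) by (simp add: nap_rooted_tree_def)
  have F': "nap_forest I' t'" using assms(2) by (simp add: nap_rooted_tree_def)
  have eq: "poset_iso (nap_interval I t) (nap_le I) (nap_interval I' t') (nap_le I') \<longleftrightarrow>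
    (\<exists>f. bij_betw f {x. x \<subseteq> t \<and> DC t x} {x. x \<subseteq> t' \<and> DC t' x} \<and>
       (\<forall>x\<in>{x. x \<subseteq> t \<and> DC t x}. \<forall>y\<in>{x. x \<subseteq> t \<and> DC t x}. x \<subseteq> y \<longleftrightarrow> f x \<subseteq> f y))"
    using iso_char[OF F F'] unfolding interval_char[OF F] interval_char[OF F'] .
  show ?thesis
  proof
    assume "poset_iso (nap_interval I t) (nap_le I) (nap_interval I' t') (nap_le I')"
    then obtain f where "bij_betw f {x. x \<subseteq> t \<and> DC t x} {x. x \<subseteq> t' \<and> DC t' x}"
      "\<forall>x\<in>{x. x \<subseteq> t \<and> DC t x}. \<forall>y\<in>{x. x \<subseteq> t \<and> DC t x}. x \<subseteq> y \<longleftrightarrow> f x \<subseteq> f y"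
      using eq by blast
    then show "rooted_tree_iso I t I' t'" using backward[OF T T'] by blast
  next
    assume "rooted_tree_iso I t I' t'"
    then obtain g where "bij_betw g I I'" "\<forall>a\<in>I. \<forall>b\<in>I. (a, b) \<in> t \<longleftrightarrow> (g a, g b) \<in> t'"
      unfolding rooted_tree_iso_def by blast
    then show "poset_iso (nap_interval I t) (nap_le I) (nap_interval I' t') (nap_le I')"
      using forward[OF F F'] eq by blast
  qed
qed

end
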